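(* Let $\Bbbk$ be a field with $\operatorname{char}\Bbbk\ne2$, let $X$ be a linearly ordered set, and let $\Lambda_X=\mathrm{DiAs}\langle X\rangle/I$, where $I$ is the ideal generated by $\{x\dashv y+y\vdash x: x,y\in X\}$. Then the images of the words $\dot x_1x_2\cdots x_k$ with $k\ge1$, $x_i\in X$, $x_2<x_3<\dots<x_k$ form a linear basis of $\Lambda_X$.
   Context: An associative dialgebra is a vector space with bilinear operations $\vdash,\dashv$ satisfying $(x\dashv y)\vdash z=(x\vdash y)\vdash z$, $x\dashv(y\vdash z)=x\dashv(y\dashv z)$, $(x\vdash y)\vdash z=x\vdash(y\vdash z)$, $(x\dashv y)\dashv z=x\dashv(y\dashv z)$, $(x\vdash y)\dashv z=x\vdash(y\dashv z)$. $\mathrm{DiAs}\langle X\rangle$ is the free associative dialgebra on $X$, with basis the words $x_1\cdots\dot x_k\cdots x_n$ meaning $x_1\vdash\cdots\vdash x_{k-1}\vdash x_k\dashv x_{k+1}\dashv\cdots\dashv x_n$; thus $\dot x_1x_2\cdots x_k=x_1\dashv x_2\dashv\cdots\dashv x_k$. *)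

theory Defs
  imports Main
begin

text \<open>A basis word of the free associative dialgebra DiAs<X>: a nonempty word
  together with the (0-based) position of its marked (dotted) letter.
  The word (w, k) stands for w!0 |- ... |- w!k -| ... -| w!(n-1).\<close>
type_synonym 'x dword = "'x list \<times> nat"

definition dwords :: "'x dword set" where
  "dwords = {(w, k). k < length w}"

fun dw_left :: "'x dword \<Rightarrow> 'x dword \<Rightarrow> 'x dword" where
  "dw_left (u, i) (v, j) = (u @ v, i)"

fun dw_right :: "'x dword \<Rightarrow> 'x dword \<Rightarrow> 'x dword" where
  "dw_right (u, i) (v, j) = (u @ v, length u + j)"

definition diasV :: "('x dword \<Rightarrow> 'k::field) set" where
  "diasV = {f. finite {u. f u \<noteq> 0} \<and> {u. f u \<noteq> 0} \<subseteq> dwords}"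

definition sng :: "'x dword \<Rightarrow> 'x dword \<Rightarrow> 'k::field" where
  "sng u = (\<lambda>w. if w = u then 1 else 0)"

definition dleft :: "('x dword \<Rightarrow> 'k::field) \<Rightarrow> ('x dword \<Rightarrow> 'k) \<Rightarrow> ('x dword \<Rightarrow> 'k)" where
  "dleft f g = (\<lambda>w. \<Sum>u\<in>{u. f u \<noteq> 0}. \<Sum>v\<in>{v. g v \<noteq> 0}.
      if dw_left u v = w then f u * g v else 0)"

definition dright :: "('x dword \<Rightarrow> 'k::field) \<Rightarrow> ('x dword \<Rightarrow> 'k) \<Rightarrow> ('x dword \<Rightarrow> 'k)" where
  "dright f g = (\<lambda>w. \<Sum>u\<in>{u. f u \<noteq> 0}. \<Sum>v\<in>{v. g v \<noteq> 0}.
      if dw_right u v = w then f u * g v else 0)"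

definition is_dideal :: "('x dword \<Rightarrow> 'k::field) set \<Rightarrow> bool" where
  "is_dideal J \<longleftrightarrow> J \<subseteq> diasV \<and> (\<lambda>_. 0) \<in> J
     \<and> (\<forall>f\<in>J. \<forall>g\<in>J. (\<lambda>w. f w + g w) \<in> J)
     \<and> (\<forall>f\<in>J. \<forall>c. (\<lambda>w. c * f w) \<in> J)
     \<and> (\<forall>f\<in>J. \<forall>g\<in>diasV. dleft f g \<in> J \<and> dleft g f \<in> J \<and> dright f g \<in> J \<and> dright g f \<in> J)"

definition dideal_gen :: "('x dword \<Rightarrow> 'k::field) set \<Rightarrow> ('x dword \<Rightarrow> 'k) set" where
  "dideal_gen S = \<Inter>{J. is_dideal J \<and> S \<subseteq> J}"

definition lambda_gens :: "('x dword \<Rightarrow> 'k::field) set" where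
  "lambda_gens = {(\<lambda>w. dleft (sng ([x], 0)) (sng ([y], 0)) w + dright (sng ([y], 0)) (sng ([x], 0)) w)
                  | x y. True}"

definition lambda_basis :: "('x::linorder) dword set" where
  "lambda_basis = {(x # xs, 0) | x xs. sorted_wrt (<) xs}"

definition lincomb :: "('x dword \<Rightarrow> 'k::field) \<Rightarrow> 'x dword set \<Rightarrow> ('x dword \<Rightarrow> 'k)" where
  "lincomb c A = (\<lambda>w. \<Sum>b\<in>A. c b * sng b w)"

end

theory Submission
  imports Defs
begin


abbreviation supp :: "('a \<Rightarrow> 'k::zero) \<Rightarrow> 'a set" where "supp f \<equiv> {u. f u \<noteq> 0}"

definition gprod :: "('x dword \<Rightarrow> 'x dword \<Rightarrow> 'x dword) \<Rightarrow> ('x dword \<Rightarrow> 'k::field) \<Rightarrow> ('x dword \<Rightarrow> 'k) \<Rightarrow> ('x dword \<Rightarrow> 'k)" where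
  "gprod P f g = (\<lambda>w. \<Sum>u\<in>supp f. \<Sum>v\<in>supp g. if P u v = w then f u * g v else 0)"

lemma dleft_gprod: "dleft = gprod dw_left" by (intro ext) (simp add: dleft_def gprod_def)
lemma dright_gprod: "dright = gprod dw_right" by (intro ext) (simp add: dright_def gprod_def)

definition ev :: "('x dword \<Rightarrow> 'k::field) \<Rightarrow> ('x dword \<Rightarrow> 'k) \<Rightarrow> 'k" where
  "ev c f = (\<Sum>u\<in>supp f. f u * c u)"

lemma ev_sup: assumes "finite U" "supp f \<subseteq> U" shows "ev c f = (\<Sum>u\<in>U. f u * c u)"
  unfolding ev_def by (rule sum.mono_neutral_left) (use assms in auto)

lemma gprod_sup:
  assumes "finite U" "finite V" "supp f \<subseteq> U" "supp g \<subseteq> V"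
  shows "gprod P f g w = (\<Sum>u\<in>U. \<Sum>v\<in>V. if P u v = w then f u * g v else 0)"
proof -
  have fs: "finite (supp f)" "finite (supp g)" using assms finite_subset by auto
  have "gprod P f g w = (\<Sum>u\<in>supp f. \<Sum>v\<in>V. if P u v = w then f u * g v else 0)"
    unfolding gprod_def
    by (intro sum.cong refl sum.mono_neutral_left) (use assms fs in auto)
  also have "\<dots> = (\<Sum>u\<in>U. \<Sum>v\<in>V. if P u v = w then f u * g v else 0)"
  proof (intro sum.mono_neutral_left)
    show "finite U" by fact
    show "supp f \<subseteq> U" by fact
    show "\<forall>u\<in>U - supp f. (\<Sum>v\<in>V. if P u v = w then f u * g v else 0) = 0"
    proof
      fix u assume "u \<in> U - supp f"
      then have "f u = 0" by simp
      then show "(\<Sum>v\<in>V. if P u v = w then f u * g v else 0) = 0" by (simp add: sum.neutral)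
    qed
  qed
  finally show ?thesis .
qed

lemma ifz: "(if Q then x else 0) * y = (if Q then x*y else (0::'a::semiring_0))" by simp

lemma ev_gprod:
  assumes "finite (supp f)" "finite (supp g)"
  shows "ev c (gprod P f g) = (\<Sum>u\<in>supp f. \<Sum>v\<in>supp g. f u * g v * c (P u v))"
proof -
  define W where "W = (\<lambda>(u,v). P u v) ` (supp f \<times> supp g)"
  have W: "finite W" using assms unfolding W_def by auto
  have sW: "supp (gprod P f g) \<subseteq> W"
  proof
    fix w assume "w \<in> supp (gprod P f g)"
    then obtain u v where "u \<in> supp f" "v \<in> supp g" "P u v = w"
      unfolding gprod_def by (smt (verit, ccfv_threshold) mem_Collect_eq sum.neutral)
    then show "w \<in> W" unfolding W_def by force
  qed
  have "ev c (gprod P f g) = (\<Sum>w\<in>W. gprod P f g w * c w)" by (rule ev_sup[OF W sW])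
  also have "\<dots> = (\<Sum>w\<in>W. \<Sum>u\<in>supp f. \<Sum>v\<in>supp g. (if P u v = w then f u * g v * c w else 0))"
    unfolding gprod_def by (simp add: sum_distrib_right ifz)
  also have "\<dots> = (\<Sum>u\<in>supp f. \<Sum>w\<in>W. \<Sum>v\<in>supp g. (if P u v = w then f u * g v * c w else 0))"
    by (rule sum.swap)
  also have "\<dots> = (\<Sum>u\<in>supp f. \<Sum>v\<in>supp g. \<Sum>w\<in>W. (if P u v = w then f u * g v * c w else 0))"
    by (rule sum.cong[OF refl], rule sum.swap)
  also have "\<dots> = (\<Sum>u\<in>supp f. \<Sum>v\<in>supp g. f u * g v * c (P u v))"
  proof (intro sum.cong refl)
    fix u v assume uv: "u \<in> supp f" "v \<in> supp g"
    have "P u v \<in> W" unfolding W_def by (rule rev_image_eqI[of "(u,v)"]) (use uv in auto)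
    then show "(\<Sum>w\<in>W. (if P u v = w then f u * g v * c w else 0)) = f u * g v * c (P u v)"
      using W by (simp add: sum.delta sum.delta')
  qed
  finally show ?thesis .
qed

lemma ev_gprod1:
  assumes "finite (supp f)" "finite (supp g)"
  shows "ev c (gprod P f g) = (\<Sum>v\<in>supp g. g v * ev (\<lambda>u. c (P u v)) f)"
proof -
  have "(\<Sum>v\<in>supp g. g v * ev (\<lambda>u. c (P u v)) f) = (\<Sum>v\<in>supp g. \<Sum>u\<in>supp f. f u * g v * c (P u v))"
    unfolding ev_def by (simp add: sum_distrib_left mult_ac)
  also have "\<dots> = (\<Sum>u\<in>supp f. \<Sum>v\<in>supp g. f u * g v * c (P u v))" by (rule sum.swap)
  finally show ?thesis using ev_gprod[OF assms] by simp
qed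

lemma ev_gprod2:
  assumes "finite (supp f)" "finite (supp g)"
  shows "ev c (gprod P f g) = (\<Sum>u\<in>supp f. f u * ev (\<lambda>v. c (P u v)) g)"
proof -
  have "(\<Sum>u\<in>supp f. f u * ev (\<lambda>v. c (P u v)) g) = (\<Sum>u\<in>supp f. \<Sum>v\<in>supp g. f u * g v * c (P u v))"
    unfolding ev_def by (simp add: sum_distrib_left mult_ac)
  then show ?thesis using ev_gprod[OF assms] by simp
qed

lemma gprod_diasV:
  assumes "f \<in> diasV" "g \<in> diasV" "\<And>u v. u \<in> dwords \<Longrightarrow> v \<in> dwords \<Longrightarrow> P u v \<in> dwords"
  shows "gprod P f g \<in> diasV"
proof -
  have fin: "finite (supp f)" "finite (supp g)" and sd: "supp f \<subseteq> dwords" "supp g \<subseteq> dwords"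
    using assms(1,2) by (auto simp: diasV_def)
  have sW: "supp (gprod P f g) \<subseteq> (\<lambda>(u,v). P u v) ` (supp f \<times> supp g)"
  proof
    fix w assume "w \<in> supp (gprod P f g)"
    then obtain u v where "u \<in> supp f" "v \<in> supp g" "P u v = w"
      unfolding gprod_def by (smt (verit, ccfv_threshold) mem_Collect_eq sum.neutral)
    then show "w \<in> (\<lambda>(u,v). P u v) ` (supp f \<times> supp g)" by force
  qed
  moreover have "(\<lambda>(u,v). P u v) ` (supp f \<times> supp g) \<subseteq> dwords"
  proof (rule image_subsetI)
    fix x assume "x \<in> supp f \<times> supp g"
    then have "fst x \<in> dwords" "snd x \<in> dwords" using sd by auto
    then show "(\<lambda>(u,v). P u v) x \<in> dwords" using assms(3) by (simp add: case_prod_beta)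
  qed
  ultimately show ?thesis using fin unfolding diasV_def by (auto intro: finite_subset)
qed

lemma dwl_dwords: "u \<in> dwords \<Longrightarrow> v \<in> dwords \<Longrightarrow> dw_left u v \<in> dwords"
  by (cases u; cases v) (auto simp: dwords_def)
lemma dwr_dwords: "u \<in> dwords \<Longrightarrow> v \<in> dwords \<Longrightarrow> dw_right u v \<in> dwords"
  by (cases u; cases v) (auto simp: dwords_def)

lemma sng_diasV: "u \<in> dwords \<Longrightarrow> sng u \<in> diasV"
  by (auto simp: diasV_def sng_def)

lemma supp_sng: "supp (sng u :: _ \<Rightarrow> 'k::field) = {u}" by (auto simp: sng_def)

lemma gprod_sng_sng: "gprod P (sng a) (sng b) = (sng (P a b) :: _ \<Rightarrow> 'k::field)"
  by (intro ext) (simp add: gprod_def supp_sng, auto simp: sng_def)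

lemma gprod_sng_2:
  "gprod P (sng p) (\<lambda>w. sng a w + sng b w) = (\<lambda>w. sng (P p a) w + (sng (P p b) w :: 'k::field))"
proof (intro ext)
  fix w
  show "gprod P (sng p) (\<lambda>w. sng a w + sng b w) w = sng (P p a) w + (sng (P p b) w :: 'k::field)"
    by (subst gprod_sup[where U="{p}" and V="{a,b}"]) (cases "a = b"; auto simp: sng_def)+
qed

lemma gprod_2_sng:
  "gprod P (\<lambda>w. sng a w + sng b w) (sng p) = (\<lambda>w. sng (P a p) w + (sng (P b p) w :: 'k::field))"
proof (intro ext)
  fix w
  show "gprod P (\<lambda>w. sng a w + sng b w) (sng p) w = sng (P a p) w + (sng (P b p) w :: 'k::field)"
    by (subst gprod_sup[where U="{a,b}" and V="{p}"]) (cases "a = b"; auto simp: sng_def)+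
qed



locale idl =
  fixes I :: "('x::linorder dword \<Rightarrow> 'k::field) set"
  assumes I_gens: "lambda_gens \<subseteq> I"
    and I_add: "f \<in> I \<Longrightarrow> g \<in> I \<Longrightarrow> (\<lambda>w. f w + g w) \<in> I"
    and I_smult: "f \<in> I \<Longrightarrow> (\<lambda>w. c * f w) \<in> I"
    and I_dl1: "f \<in> I \<Longrightarrow> g \<in> diasV \<Longrightarrow> dleft f g \<in> I"
    and I_dl2: "f \<in> I \<Longrightarrow> g \<in> diasV \<Longrightarrow> dleft g f \<in> I"
    and I_dr1: "f \<in> I \<Longrightarrow> g \<in> diasV \<Longrightarrow> dright f g \<in> I"
    and I_dr2: "f \<in> I \<Longrightarrow> g \<in> diasV \<Longrightarrow> dright g f \<in> I"
    and two: "(2::'k) \<noteq> 0"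
begin

definition eqv :: "('x dword \<Rightarrow> 'k) \<Rightarrow> ('x dword \<Rightarrow> 'k) \<Rightarrow> bool" where
  "eqv f g \<longleftrightarrow> (\<lambda>w. f w - g w) \<in> I"

lemma G0: "(\<lambda>w. sng ([x,y],0) w + sng ([y,x],1) w) \<in> I"
proof -
  have "(\<lambda>w. dleft (sng ([x], 0)) (sng ([y], 0)) w + dright (sng ([y], 0)) (sng ([x], 0)) w) \<in> I"
    using I_gens unfolding lambda_gens_def by blast
  then show ?thesis by (simp add: dleft_gprod dright_gprod gprod_sng_sng)
qed

lemma zero_I: "(\<lambda>w. 0) \<in> I"
  using I_smult[OF G0, of 0] by simp

lemma G1: "(\<lambda>w. sng (x#y#r,0) w + sng (y#x#r,1) w) \<in> I"
proof (cases "r = []")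
  case True then show ?thesis using G0 by simp
next
  case False
  have "dleft (\<lambda>w. sng ([x,y],0) w + sng ([y,x],1) w) (sng (r,0)) \<in> I"
    by (rule I_dl1[OF G0 sng_diasV]) (use False in \<open>simp add: dwords_def\<close>)
  then show ?thesis by (simp add: dleft_gprod gprod_2_sng)
qed

lemma E1: "(\<lambda>w. sng (p@x#y#r, length p) w + sng (p@y#x#r, Suc (length p)) w) \<in> I"
proof (cases "p = []")
  case True then show ?thesis using G1 by simp
next
  case False
  have "dright (sng (p,0)) (\<lambda>w. sng (x#y#r,0) w + sng (y#x#r,1) w) \<in> I"
    by (rule I_dr2[OF G1 sng_diasV]) (use False in \<open>simp add: dwords_def\<close>)
  then show ?thesis by (simp add: dright_gprod gprod_sng_2)
qed

lemma E2a: "p \<noteq> [] \<Longrightarrow> (\<lambda>w. sng (p@[y,z],0) w + sng (p@[z,y],0) w) \<in> I"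
proof -
  assume p: "p \<noteq> []"
  have "dleft (sng (p,0)) (\<lambda>w. sng ([y,z],0) w + sng ([z,y],1) w) \<in> I"
    by (rule I_dl2[OF G0 sng_diasV]) (use p in \<open>simp add: dwords_def\<close>)
  then show ?thesis by (simp add: dleft_gprod gprod_sng_2)
qed

lemma E2: "p \<noteq> [] \<Longrightarrow> (\<lambda>w. sng (p@y#z#r,0) w + sng (p@z#y#r,0) w) \<in> I"
proof (cases "r = []")
  case True
  assume "p \<noteq> []" then show ?thesis using E2a True by simp
next
  case False
  assume p: "p \<noteq> []"
  have "dleft (\<lambda>w. sng (p@[y,z],0) w + sng (p@[z,y],0) w) (sng (r,0)) \<in> I"
    by (rule I_dl1[OF E2a[OF p] sng_diasV]) (use False in \<open>simp add: dwords_def\<close>)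
  then show ?thesis by (simp add: dleft_gprod gprod_2_sng)
qed

lemma eqv_refl: "eqv f f" unfolding eqv_def using zero_I by simp

lemma eqv_trans: "eqv f g \<Longrightarrow> eqv g h \<Longrightarrow> eqv f h"
  unfolding eqv_def by (drule (1) I_add) simp

lemma eqv_scale: "eqv f g \<Longrightarrow> eqv (\<lambda>w. c * f w) (\<lambda>w. c * g w)"
  unfolding eqv_def by (drule I_smult[of _ c]) (simp add: right_diff_distrib)

lemma eqv_I: "(\<lambda>w. f w + g w) \<in> I \<Longrightarrow> eqv f (\<lambda>w. - g w)"
  unfolding eqv_def by simp

lemma dotmove: "k < length w \<Longrightarrow>
   eqv (sng (w,k)) (\<lambda>z. (-1)^k * sng (w!k # take k w @ drop (Suc k) w, 0) z)"
proof (induction k arbitrary: w)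
  case 0
  then show ?case by (cases w) (auto intro: eqv_refl)
next
  case (Suc k)
  define p where "p = take k w"
  define y where "y = w!k"
  define x where "x = w!Suc k"
  define r where "r = drop (Suc (Suc k)) w"
  have lp: "length p = k" using Suc.prems by (simp add: p_def)
  have w: "w = p @ y # x # r"
    unfolding p_def y_def x_def r_def using Suc.prems
    by (metis Cons_nth_drop_Suc Suc_lessD append_take_drop_id)
  have e1: "eqv (sng (w, Suc k)) (\<lambda>z. - sng (p@x#y#r, k) z)"
    using E1[of p x y r] unfolding w lp by (intro eqv_I) (simp add: add.commute)
  have ih: "eqv (sng (p@x#y#r, k)) (\<lambda>z. (-1)^k * sng (x # p @ y # r, 0) z)"
    using Suc.IH[of "p@x#y#r"] lp by (simp add: nth_append)
  have "eqv (\<lambda>z. - sng (p@x#y#r, k) z) (\<lambda>z. (-1)^Suc k * sng (x # p @ y # r, 0) z)"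
    using eqv_scale[OF ih, of "-1"] by simp
  moreover have "w ! Suc k # take (Suc k) w @ drop (Suc (Suc k)) w = x # p @ y # r"
    unfolding w using lp by (simp add: nth_append)
  ultimately show ?case using eqv_trans[OF e1] by simp
qed

lemma ins: "sorted_wrt (<) m \<Longrightarrow> q \<noteq> [] \<Longrightarrow>
  \<exists>s m'. sorted_wrt (<) m' \<and> set m' \<subseteq> insert a (set m) \<and>
     eqv (sng (q@a#m,0)) (\<lambda>z. s * sng (q@m',0) z)"
proof (induction m arbitrary: q)
  case Nil
  show ?case by (rule exI[of _ 1], rule exI[of _ "[a]"]) (simp add: eqv_refl)
next
  case (Cons b m)
  consider "a < b" | "a = b" | "b < a" by fastforce
  then show ?case
  proof cases
    case 1
    show ?thesis using Cons.prems 1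
      by (intro exI[of _ 1] exI[of _ "a#b#m"]) (auto simp: eqv_refl)
  next
    case 2
    have "(\<lambda>w. 2 * sng (q@a#a#m,0) w) \<in> I" using E2[OF Cons.prems(2), of a a m] by simp
    then have "(\<lambda>w. inverse 2 * (2 * sng (q@a#a#m,0) w)) \<in> I" by (rule I_smult)
    then have "eqv (sng (q@a#b#m,0)) (\<lambda>z. 0 * sng (q@[],0) z)"
      unfolding eqv_def 2 using two by (simp add: field_simps)
    then show ?thesis by (intro exI[of _ 0] exI[of _ "[]"]) simp
  next
    case 3
    have sm: "sorted_wrt (<) m" and bm: "\<forall>x\<in>set m. b < x" using Cons.prems by auto
    obtain s m' where m': "sorted_wrt (<) m'" "set m' \<subseteq> insert a (set m)"
      "eqv (sng ((q@[b])@a#m,0)) (\<lambda>z. s * sng ((q@[b])@m',0) z)"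
      using Cons.IH[OF sm, of "q@[b]"] by auto
    have e: "eqv (sng (q@a#b#m,0)) (\<lambda>z. - sng (q@b#a#m,0) z)"
      using E2[OF Cons.prems(2), of a b m] by (rule eqv_I)
    have "eqv (\<lambda>z. - sng (q@b#a#m,0) z) (\<lambda>z. (- s) * sng (q@b#m',0) z)"
      using eqv_scale[OF m'(3), of "-1"] by simp
    then have "eqv (sng (q@a#b#m,0)) (\<lambda>z. (- s) * sng (q@(b#m'),0) z)"
      using eqv_trans[OF e] by simp
    moreover have "sorted_wrt (<) (b#m')" using m' bm 3 by auto
    moreover have "set (b#m') \<subseteq> insert a (set (b#m))" using m' by auto
    ultimately show ?thesis by blast
  qed
qed

lemma fullsort: "q \<noteq> [] \<Longrightarrow> \<exists>s m'. sorted_wrt (<) m' \<and> eqv (sng (q@l,0)) (\<lambda>z. s * sng (q@m',0) z)"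
proof (induction l arbitrary: q)
  case Nil
  show ?case by (rule exI[of _ 1], rule exI[of _ "[]"]) (simp add: eqv_refl)
next
  case (Cons a l)
  obtain s m' where m': "sorted_wrt (<) m'" "eqv (sng ((q@[a])@l,0)) (\<lambda>z. s * sng ((q@[a])@m',0) z)"
    using Cons.IH[of "q@[a]"] by auto
  obtain s' m'' where m'': "sorted_wrt (<) m''" "eqv (sng (q@a#m',0)) (\<lambda>z. s' * sng (q@m'',0) z)"
    using ins[OF m'(1) Cons.prems] by blast
  have "eqv (\<lambda>z. s * sng (q@a#m',0) z) (\<lambda>z. (s*s') * sng (q@m'',0) z)"
    using eqv_scale[OF m''(2), of s] by (simp add: mult.assoc)
  then have "eqv (sng (q@a#l,0)) (\<lambda>z. (s*s') * sng (q@m'',0) z)"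
    using eqv_trans[of _ "\<lambda>z. s * sng (q@a#m',0) z"] m'(2) by simp
  then show ?case using m''(1) by blast
qed

lemma word_red: "u \<in> dwords \<Longrightarrow> \<exists>s t. t \<in> lambda_basis \<and> eqv (sng u) (\<lambda>z. s * sng t z)"
proof -
  assume u: "u \<in> dwords"
  obtain w k where uk: "u = (w,k)" "k < length w" using u by (cases u) (auto simp: dwords_def)
  have d: "eqv (sng u) (\<lambda>z. (-1)^k * sng ([w!k] @ (take k w @ drop (Suc k) w), 0) z)"
    using dotmove[OF uk(2)] uk(1) by simp
  obtain s m' where m': "sorted_wrt (<) m'"
    "eqv (sng ([w!k] @ (take k w @ drop (Suc k) w), 0)) (\<lambda>z. s * sng ([w!k]@m',0) z)"
    using fullsort[of "[w!k]"] by blast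
  have "eqv (sng u) (\<lambda>z. ((-1)^k * s) * sng ([w!k]@m',0) z)"
    using eqv_trans[OF d] eqv_scale[OF m'(2), of "(-1)^k"] by (simp add: mult.assoc)
  moreover have "([w!k]@m',0) \<in> lambda_basis" using m'(1) by (simp add: lambda_basis_def)
  ultimately show ?thesis by blast
qed

end



definition rst :: "nat \<Rightarrow> 'a list \<Rightarrow> 'a list" where "rst k w = take k w @ drop (Suc k) w"

definition alt :: "('x \<Rightarrow> 'x list \<Rightarrow> 'k::field) \<Rightarrow> bool" where
  "alt A \<longleftrightarrow> (\<forall>x l1 p q l2. A x (l1@p#q#l2) = - A x (l1@q#p#l2)) \<and> (\<forall>x l1 p l2. A x (l1@p#p#l2) = 0)"

definition inC :: "('x dword \<Rightarrow> 'k::field) \<Rightarrow> bool" where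
  "inC c \<longleftrightarrow> (\<exists>A. alt A \<and> (\<forall>w k. k < length w \<longrightarrow> c (w,k) = (-1)^k * A (w!k) (rst k w)))"

lemma alt_swap: "alt A \<Longrightarrow> A x (l1@p#q#l2) = - A x (l1@q#p#l2)" unfolding alt_def by blast
lemma alt_same: "alt A \<Longrightarrow> A x (l1@p#p#l2) = 0" unfolding alt_def by blast

lemma alt_move: "alt A \<Longrightarrow> A x (l1 @ m @ z # l2) = (-1)^length m * A x (l1 @ z # m @ l2)"
proof (induction m arbitrary: l1)
  case Nil then show ?case by simp
next
  case (Cons y m)
  have "A x (l1 @ (y#m) @ z # l2) = A x ((l1@[y]) @ m @ z # l2)" by simp
  also have "\<dots> = (-1)^length m * A x ((l1@[y]) @ z # m @ l2)" using Cons by blast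
  also have "A x ((l1@[y]) @ z # m @ l2) = - A x (l1 @ z # y # m @ l2)"
    using alt_swap[OF Cons.prems, of x l1 y z "m@l2"] by simp
  finally show ?case by simp
qed

lemma split_at: "i < length a \<Longrightarrow> a = take i a @ a!i # drop (Suc i) a"
  by (simp add: id_take_nth_drop)

lemma move_rst: "alt A \<Longrightarrow> i < length a \<Longrightarrow> A x (l1 @ a @ l2) = (-1)^i * A x (l1 @ a!i # rst i a @ l2)"
proof -
  assume A: "alt A" and i: "i < length a"
  have "A x (l1 @ a @ l2) = A x (l1 @ take i a @ a!i # (drop (Suc i) a @ l2))"
    by (subst split_at[OF i]) simp
  also have "\<dots> = (-1)^length (take i a) * A x (l1 @ a!i # take i a @ drop (Suc i) a @ l2)"
    by (rule alt_move[OF A])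
  finally show ?thesis using i by (simp add: rst_def)
qed

lemma cl1: assumes "inC c" "j < length b" shows "inC (\<lambda>u. c (dw_left u (b,j)))"
proof -
  obtain A where A: "alt A" "\<And>w k. k < length w \<Longrightarrow> c (w,k) = (-1)^k * A (w!k) (rst k w)"
    using assms(1) unfolding inC_def by blast
  define A' where "A' = (\<lambda>x l. A x (l @ b))"
  have "alt A'" unfolding alt_def A'_def
  proof (intro conjI allI)
    fix x l1 p q l2
    show "A x ((l1 @ p # q # l2) @ b) = - A x ((l1 @ q # p # l2) @ b)"
      using alt_swap[OF A(1), of x l1 p q "l2@b"] by simp
    show "A x ((l1 @ p # p # l2) @ b) = 0"
      using alt_same[OF A(1), of x l1 p "l2@b"] by simp
  qed
  moreover have "\<forall>a i. i < length a \<longrightarrow> c (dw_left (a,i) (b,j)) = (-1)^i * A' (a!i) (rst i a)"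
    using A(2) by (auto simp: A'_def rst_def nth_append)
  ultimately show ?thesis unfolding inC_def by blast
qed

lemma cl2: assumes "inC c" "j < length b" shows "inC (\<lambda>u. c (dw_left (b,j) u))"
proof -
  obtain A where A: "alt A" "\<And>w k. k < length w \<Longrightarrow> c (w,k) = (-1)^k * A (w!k) (rst k w)"
    using assms(1) unfolding inC_def by blast
  define A' where "A' = (\<lambda>x l. (-1)^j * A (b!j) (rst j b @ x # l))"
  have "alt A'" unfolding alt_def A'_def
  proof (intro conjI allI)
    fix x l1 p q l2
    show "(-1)^j * A (b!j) (rst j b @ x # l1 @ p # q # l2) = - ((-1)^j * A (b!j) (rst j b @ x # l1 @ q # p # l2))"
      using alt_swap[OF A(1), of "b!j" "rst j b @ x # l1" p q l2] by simp
    show "(-1)^j * A (b!j) (rst j b @ x # l1 @ p # p # l2) = 0"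
      using alt_same[OF A(1), of "b!j" "rst j b @ x # l1" p l2] by simp
  qed
  moreover have "\<forall>a i. i < length a \<longrightarrow> c (dw_left (b,j) (a,i)) = (-1)^i * A' (a!i) (rst i a)"
  proof (intro allI impI)
    fix a :: "'a list" and i assume i: "i < length a"
    have "c (dw_left (b,j) (a,i)) = (-1)^j * A (b!j) (rst j b @ a)"
      using A(2)[of j "b@a"] assms(2) by (simp add: rst_def nth_append)
    also have "A (b!j) (rst j b @ a) = (-1)^i * A (b!j) (rst j b @ a!i # rst i a)"
      using move_rst[OF A(1) i, of "b!j" "rst j b" "[]"] by simp
    finally show "c (dw_left (b,j) (a,i)) = (-1)^i * A' (a!i) (rst i a)"
      by (simp add: A'_def mult_ac)
  qed
  ultimately show ?thesis unfolding inC_def by blast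
qed

lemma cl3: assumes "inC c" "j < length b" shows "inC (\<lambda>u. c (dw_right u (b,j)))"
proof -
  obtain A where A: "alt A" "\<And>w k. k < length w \<Longrightarrow> c (w,k) = (-1)^k * A (w!k) (rst k w)"
    using assms(1) unfolding inC_def by blast
  define A' where "A' = (\<lambda>x l. (-1)^(Suc (length l) + j) * A (b!j) (x # l @ rst j b))"
  have "alt A'" unfolding alt_def A'_def
  proof (intro conjI allI)
    fix x l1 p q l2
    show "(-1)^(Suc (length (l1 @ p # q # l2)) + j) * A (b!j) (x # (l1 @ p # q # l2) @ rst j b) =
       - ((-1)^(Suc (length (l1 @ q # p # l2)) + j) * A (b!j) (x # (l1 @ q # p # l2) @ rst j b))"
      using alt_swap[OF A(1), of "b!j" "x # l1" p q "l2 @ rst j b"] by simp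
    show "(-1)^(Suc (length (l1 @ p # p # l2)) + j) * A (b!j) (x # (l1 @ p # p # l2) @ rst j b) = 0"
      using alt_same[OF A(1), of "b!j" "x # l1" p "l2 @ rst j b"] by simp
  qed
  moreover have "\<forall>a i. i < length a \<longrightarrow> c (dw_right (a,i) (b,j)) = (-1)^i * A' (a!i) (rst i a)"
  proof (intro allI impI)
    fix a :: "'a list" and i assume i: "i < length a"
    have e1: "c (dw_right (a,i) (b,j)) = (-1)^(length a + j) * A (b!j) (a @ rst j b)"
      using A(2)[of "length a + j" "a@b"] assms(2) by (simp add: rst_def nth_append)
    have e2: "A (b!j) (a @ rst j b) = (-1)^i * A (b!j) (a!i # rst i a @ rst j b)"
      using move_rst[OF A(1) i, of "b!j" "[]" "rst j b"] by simp
    have L: "Suc (length (rst i a)) = length a" using i by (simp add: rst_def)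
    show "c (dw_right (a,i) (b,j)) = (-1)^i * A' (a!i) (rst i a)"
      unfolding A'_def e1 e2 L by (simp add: mult_ac)
  qed
  ultimately show ?thesis unfolding inC_def by blast
qed

lemma cl4: assumes "inC c" "j < length b" shows "inC (\<lambda>u. c (dw_right (b,j) u))"
proof -
  obtain A where A: "alt A" "\<And>w k. k < length w \<Longrightarrow> c (w,k) = (-1)^k * A (w!k) (rst k w)"
    using assms(1) unfolding inC_def by blast
  define A' where "A' = (\<lambda>x l. (-1)^(length b) * A x (b @ l))"
  have "alt A'" unfolding alt_def A'_def
  proof (intro conjI allI)
    fix x l1 p q l2
    show "(-1)^(length b) * A x (b @ l1 @ p # q # l2) = - ((-1)^(length b) * A x (b @ l1 @ q # p # l2))"
      using alt_swap[OF A(1), of x "b @ l1" p q l2] by simp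
    show "(-1)^(length b) * A x (b @ l1 @ p # p # l2) = 0"
      using alt_same[OF A(1), of x "b @ l1" p l2] by simp
  qed
  moreover have "\<forall>a i. i < length a \<longrightarrow> c (dw_right (b,j) (a,i)) = (-1)^i * A' (a!i) (rst i a)"
    using A(2) by (auto simp: A'_def rst_def nth_append power_add mult_ac)
  ultimately show ?thesis unfolding inC_def by blast
qed



lemma diasV_add: "f \<in> diasV \<Longrightarrow> g \<in> diasV \<Longrightarrow> (\<lambda>w. f w + g w) \<in> diasV"
proof -
  assume a: "f \<in> diasV" "g \<in> diasV"
  have "supp (\<lambda>w. f w + g w) \<subseteq> supp f \<union> supp g" by auto
  then show ?thesis using a unfolding diasV_def by (auto intro: finite_subset)
qed

lemma diasV_smult: "f \<in> diasV \<Longrightarrow> (\<lambda>w. c * f w) \<in> diasV"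
proof -
  assume a: "f \<in> diasV"
  have "supp (\<lambda>w. c * f w) \<subseteq> supp f" by auto
  then show ?thesis using a unfolding diasV_def by (auto intro: finite_subset)
qed

lemma ev_add: "f \<in> diasV \<Longrightarrow> g \<in> diasV \<Longrightarrow> ev c (\<lambda>w. f w + g w) = ev c f + ev c g"
proof -
  assume a: "f \<in> diasV" "g \<in> diasV"
  then have fin: "finite (supp f \<union> supp g)" by (auto simp: diasV_def)
  have "ev c (\<lambda>w. f w + g w) = (\<Sum>u\<in>supp f \<union> supp g. (f u + g u) * c u)"
    by (rule ev_sup[OF fin]) auto
  also have "\<dots> = (\<Sum>u\<in>supp f \<union> supp g. f u * c u) + (\<Sum>u\<in>supp f \<union> supp g. g u * c u)"
    by (simp add: distrib_right sum.distrib)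
  also have "\<dots> = ev c f + ev c g"
    using ev_sup[OF fin, of f c] ev_sup[OF fin, of g c] by auto
  finally show ?thesis .
qed

lemma ev_smult: "f \<in> diasV \<Longrightarrow> ev c (\<lambda>w. d * f w) = d * ev c f"
proof -
  assume a: "f \<in> diasV"
  then have fin: "finite (supp f)" by (auto simp: diasV_def)
  have "ev c (\<lambda>w. d * f w) = (\<Sum>u\<in>supp f. (d * f u) * c u)"
    by (rule ev_sup[OF fin]) auto
  also have "\<dots> = d * ev c f" by (simp add: ev_def sum_distrib_left mult_ac)
  finally show ?thesis .
qed

definition Kset :: "('x dword \<Rightarrow> 'k::field) set" where
  "Kset = {f \<in> diasV. \<forall>c. inC c \<longrightarrow> ev c f = 0}"

lemma ev_prod_zero:
  fixes f g c :: "'x dword \<Rightarrow> 'k::field" and P :: "'x dword \<Rightarrow> 'x dword \<Rightarrow> 'x dword"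
  assumes f: "f \<in> Kset" and g: "g \<in> diasV"
    and cl: "\<And>(c :: 'x dword \<Rightarrow> 'k) v. inC c \<Longrightarrow> v \<in> dwords \<Longrightarrow> inC (\<lambda>u. c (P u v))"
    and c: "inC c"
  shows "ev c (gprod P f g) = 0"
proof -
  have fd: "f \<in> diasV" using f by (simp add: Kset_def)
  have fin: "finite (supp f)" "finite (supp g)" and sg: "supp g \<subseteq> dwords"
    using fd g by (auto simp: diasV_def)
  have "ev c (gprod P f g) = (\<Sum>v\<in>supp g. g v * ev (\<lambda>u. c (P u v)) f)" by (rule ev_gprod1[OF fin])
  also have "\<dots> = 0"
  proof (rule sum.neutral, rule ballI)
    fix v assume "v \<in> supp g"
    then have "v \<in> dwords" using sg by blast
    then have "inC (\<lambda>u. c (P u v))" using cl[OF c] by blast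
    then show "g v * ev (\<lambda>u. c (P u v)) f = 0" using f by (simp add: Kset_def)
  qed
  finally show ?thesis .
qed

lemma ev_prod_zero2:
  fixes f g c :: "'x dword \<Rightarrow> 'k::field" and P :: "'x dword \<Rightarrow> 'x dword \<Rightarrow> 'x dword"
  assumes f: "f \<in> Kset" and g: "g \<in> diasV"
    and cl: "\<And>(c :: 'x dword \<Rightarrow> 'k) u. inC c \<Longrightarrow> u \<in> dwords \<Longrightarrow> inC (\<lambda>v. c (P u v))"
    and c: "inC c"
  shows "ev c (gprod P g f) = 0"
proof -
  have fd: "f \<in> diasV" using f by (simp add: Kset_def)
  have fin: "finite (supp g)" "finite (supp f)" and sg: "supp g \<subseteq> dwords"
    using fd g by (auto simp: diasV_def)
  have "ev c (gprod P g f) = (\<Sum>u\<in>supp g. g u * ev (\<lambda>v. c (P u v)) f)" by (rule ev_gprod2[OF fin])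
  also have "\<dots> = 0"
  proof (rule sum.neutral, rule ballI)
    fix u assume "u \<in> supp g"
    then have "u \<in> dwords" using sg by blast
    then have "inC (\<lambda>v. c (P u v))" using cl[OF c] by blast
    then show "g u * ev (\<lambda>v. c (P u v)) f = 0" using f by (simp add: Kset_def)
  qed
  finally show ?thesis .
qed

lemma cl1': "inC c \<Longrightarrow> v \<in> dwords \<Longrightarrow> inC (\<lambda>u. c (dw_left u v))"
  by (cases v) (auto simp: dwords_def intro: cl1)
lemma cl2': "inC c \<Longrightarrow> v \<in> dwords \<Longrightarrow> inC (\<lambda>u. c (dw_left v u))"
  by (cases v) (auto simp: dwords_def intro: cl2)
lemma cl3': "inC c \<Longrightarrow> v \<in> dwords \<Longrightarrow> inC (\<lambda>u. c (dw_right u v))"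
  by (cases v) (auto simp: dwords_def intro: cl3)
lemma cl4': "inC c \<Longrightarrow> v \<in> dwords \<Longrightarrow> inC (\<lambda>u. c (dw_right v u))"
  by (cases v) (auto simp: dwords_def intro: cl4)

lemma Kset_prod:
  assumes f: "f \<in> Kset" and g: "g \<in> diasV"
  shows "dleft f g \<in> Kset" "dleft g f \<in> Kset" "dright f g \<in> Kset" "dright g f \<in> Kset"
proof -
  have fd: "f \<in> diasV" using f by (simp add: Kset_def)
  show "dleft f g \<in> Kset" unfolding Kset_def dleft_gprod
    using gprod_diasV[OF fd g dwl_dwords] ev_prod_zero[where P=dw_left, OF f g cl1'] by auto
  show "dleft g f \<in> Kset" unfolding Kset_def dleft_gprod
    using gprod_diasV[OF g fd dwl_dwords] ev_prod_zero2[where P=dw_left, OF f g cl2'] by auto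
  show "dright f g \<in> Kset" unfolding Kset_def dright_gprod
    using gprod_diasV[OF fd g dwr_dwords] ev_prod_zero[where P=dw_right, OF f g cl3'] by auto
  show "dright g f \<in> Kset" unfolding Kset_def dright_gprod
    using gprod_diasV[OF g fd dwr_dwords] ev_prod_zero2[where P=dw_right, OF f g cl4'] by auto
qed

lemma gen_form: "(\<lambda>w. dleft (sng ([x], 0)) (sng ([y], 0)) w + dright (sng ([y], 0)) (sng ([x], 0)) w)
   = (\<lambda>w. sng ([x,y],0) w + (sng ([y,x],1) w :: 'k::field))"
  by (simp add: dleft_gprod dright_gprod gprod_sng_sng)

lemma gens_K: "lambda_gens \<subseteq> Kset"
proof
  fix g :: "'x dword \<Rightarrow> 'k::field" assume "g \<in> lambda_gens"
  then obtain x y where g: "g = (\<lambda>w. sng ([x,y],0) w + sng ([y,x],1) w)"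
    unfolding lambda_gens_def gen_form by blast
  have d1: "sng ([x,y],0) \<in> (diasV :: ('x dword \<Rightarrow> 'k) set)" by (rule sng_diasV) (simp add: dwords_def)
  have d2: "sng ([y,x],1) \<in> (diasV :: ('x dword \<Rightarrow> 'k) set)" by (rule sng_diasV) (simp add: dwords_def)
  have "g \<in> diasV" unfolding g by (rule diasV_add[OF d1 d2])
  moreover have "ev c g = 0" if c: "inC c" for c
  proof -
    obtain A where A: "alt A" "\<And>w k. k < length w \<Longrightarrow> c (w,k) = (-1)^k * A (w!k) (rst k w)"
      using c unfolding inC_def by blast
    have "ev c g = ev c (sng ([x,y],0)) + ev c (sng ([y,x],1))" unfolding g by (rule ev_add[OF d1 d2])
    also have "ev c (sng ([x,y],0)) = c ([x,y],0)" by (simp add: ev_def supp_sng, simp add: sng_def)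
    also have "ev c (sng ([y,x],1)) = c ([y,x],1)" by (simp add: ev_def supp_sng, simp add: sng_def)
    finally show ?thesis using A(2)[of 0 "[x,y]"] A(2)[of 1 "[y,x]"] by (simp add: rst_def)
  qed
  ultimately show "g \<in> Kset" by (simp add: Kset_def)
qed

lemma K_add: "f \<in> Kset \<Longrightarrow> g \<in> Kset \<Longrightarrow> (\<lambda>w. f w + g w) \<in> Kset"
  unfolding Kset_def using diasV_add ev_add by fastforce

lemma K_smult: "f \<in> Kset \<Longrightarrow> (\<lambda>w. c * f w) \<in> Kset"
  unfolding Kset_def using diasV_smult ev_smult by fastforce

lemma Kset_dideal: "is_dideal (Kset :: ('x dword \<Rightarrow> 'k::field) set)"
  unfolding is_dideal_def
  apply (intro conjI)
  subgoal by (auto simp: Kset_def)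
  subgoal by (simp add: Kset_def diasV_def ev_def)
  subgoal using K_add by blast
  subgoal using K_smult by blast
  subgoal using Kset_prod by blast
  done

lemma I_sub_K: "dideal_gen lambda_gens \<subseteq> (Kset :: ('x dword \<Rightarrow> 'k::field) set)"
  unfolding dideal_gen_def using Kset_dideal gens_K by blast



fun ninv :: "'a::linorder list \<Rightarrow> nat" where
  "ninv [] = 0"
| "ninv (a#l) = length (filter (\<lambda>b. b < a) l) + ninv l"

lemma lf_swap: "length (filter P (l1@p#q#l2)) = length (filter P (l1@q#p#l2))"
  by simp

lemma ninv_swap: "p \<noteq> q \<Longrightarrow> ninv (l1@p#q#l2) = Suc (ninv (l1@q#p#l2)) \<or> Suc (ninv (l1@p#q#l2)) = ninv (l1@q#p#l2)"
proof (induction l1)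
  case Nil
  then show ?case by (cases "p < q") (auto simp: not_less_iff_gr_or_eq)
next
  case (Cons a l1)
  then show ?case using lf_swap[of "\<lambda>b. b < a" l1 p q l2] by simp
qed

lemma ninv_sorted: "sorted_wrt (<) l \<Longrightarrow> ninv l = 0"
proof (induction l)
  case Nil then show ?case by simp
next
  case (Cons a l)
  then have "filter (\<lambda>b. b < a) l = []" by (auto simp: filter_empty_conv)
  then show ?case using Cons by simp
qed

definition Ab :: "'x::linorder \<Rightarrow> 'x list \<Rightarrow> 'x \<Rightarrow> 'x list \<Rightarrow> 'k::field" where
  "Ab y s x l = (if x = y \<and> distinct l \<and> set l = set s then (-1)^ninv l else 0)"

lemma neg_pow: "a = Suc b \<or> Suc a = b \<Longrightarrow> (-1::'k::ring_1)^a = - ((-1)^b)"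
  by auto

lemma Ab_swap: "Ab y s x (l1 @ p # q # l2) = - Ab y s x (l1 @ q # p # l2)"
proof -
  have st: "set (l1 @ p # q # l2) = set (l1 @ q # p # l2)" by auto
  have ds: "distinct (l1 @ p # q # l2) = distinct (l1 @ q # p # l2)" by auto
  show ?thesis
  proof (cases "x = y \<and> distinct (l1 @ p # q # l2) \<and> set (l1 @ p # q # l2) = set s")
    case True
    then have "p \<noteq> q" by auto
    have c2: "x = y \<and> distinct (l1 @ q # p # l2) \<and> set (l1 @ q # p # l2) = set s"
      using True unfolding st ds by assumption
    show ?thesis unfolding Ab_def if_P[OF True] if_P[OF c2]
      by (rule neg_pow, rule ninv_swap) fact
  next
    case False
    have c2: "\<not> (x = y \<and> distinct (l1 @ q # p # l2) \<and> set (l1 @ q # p # l2) = set s)"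
      using False unfolding st ds by assumption
    show ?thesis unfolding Ab_def if_not_P[OF False] if_not_P[OF c2] by simp
  qed
qed

lemma alt_Ab: "alt (Ab y s)"
  unfolding alt_def
  by (intro conjI allI Ab_swap) (simp add: Ab_def)

definition cb :: "'x::linorder \<Rightarrow> 'x list \<Rightarrow> 'x dword \<Rightarrow> 'k::field" where
  "cb y s = (\<lambda>(w,k). (-1)^k * Ab y s (w!k) (rst k w))"

lemma inC_cb: "inC (cb y s)"
  unfolding inC_def using alt_Ab by (auto simp: cb_def)

lemma cb_basis:
  assumes "(y#s,0) \<in> lambda_basis" "u \<in> lambda_basis"
  shows "cb y s u = (if u = (y#s,0) then 1 else (0::'k::field))"
proof -
  obtain y' s' where u: "u = (y'#s',0)" "sorted_wrt (<) s'" using assms(2) by (auto simp: lambda_basis_def)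
  have s: "sorted_wrt (<) s" using assms(1) by (auto simp: lambda_basis_def)
  have "cb y s u = Ab y s y' s'" by (simp add: cb_def u rst_def)
  also have "\<dots> = (if u = (y#s,0) then 1 else 0)"
  proof (cases "y' = y \<and> set s' = set s")
    case True
    then have "s' = s" using u(2) s by (metis sorted_distinct_set_unique strict_sorted_iff)
    then show ?thesis using True u s by (simp add: Ab_def ninv_sorted strict_sorted_iff)
  next
    case False
    then show ?thesis using u by (auto simp: Ab_def)
  qed
  finally show ?thesis .
qed

lemma lincomb_eq: "finite A \<Longrightarrow> lincomb c A w = (if w \<in> A then c w else 0)"
  unfolding lincomb_def sng_def by (simp add: if_distrib[of "\<lambda>x. c _ * x"] cong: if_cong)



context idl begin

lemma eqv_add: "eqv f1 g1 \<Longrightarrow> eqv f2 g2 \<Longrightarrow> eqv (\<lambda>w. f1 w + f2 w) (\<lambda>w. g1 w + g2 w)"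
  unfolding eqv_def by (drule (1) I_add) (simp add: algebra_simps)

lemma span_fin: "finite F \<Longrightarrow> \<forall>f. f \<in> diasV \<longrightarrow> supp f \<subseteq> F \<longrightarrow>
   (\<exists>A c. finite A \<and> A \<subseteq> lambda_basis \<and> eqv f (lincomb c A))"
proof (induction F rule: finite_induct)
  case empty
  show ?case
  proof (intro allI impI)
    fix f :: "'x dword \<Rightarrow> 'k" assume "supp f \<subseteq> {}"
    then have "\<And>w. f w = 0" by blast
    then have f: "f = (\<lambda>w. 0)" by (intro ext) simp
    show "\<exists>A c. finite A \<and> A \<subseteq> lambda_basis \<and> eqv f (lincomb c A)"
      by (rule exI[of _ "{}"], rule exI[of _ "\<lambda>_. 0"]) (simp add: f lincomb_def eqv_refl)
  qed
next
  case (insert u F)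
  show ?case
  proof (intro allI impI)
    fix f :: "'x dword \<Rightarrow> 'k" assume fd: "f \<in> diasV" and sf: "supp f \<subseteq> insert u F"
    define f' where "f' = (\<lambda>w. if w = u then 0 else f w)"
    have "supp f' \<subseteq> supp f" by (auto simp: f'_def)
    then have f'd: "f' \<in> diasV" using fd unfolding diasV_def by (auto intro: finite_subset)
    have "supp f' \<subseteq> F" using sf by (auto simp: f'_def)
    from insert.IH[rule_format, OF f'd this]
    obtain A c where A: "finite A" "A \<subseteq> lambda_basis" "eqv f' (lincomb c A)"
      by blast
    show "\<exists>A c. finite A \<and> A \<subseteq> lambda_basis \<and> eqv f (lincomb c A)"
    proof (cases "f u = 0")
      case True
      then have "f' = f" by (auto simp: f'_def)
      then show ?thesis using A by blast
    next
      case False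
      then have "u \<in> supp f" by simp
      then have "u \<in> dwords" using fd unfolding diasV_def by blast
      then obtain s t where t: "t \<in> lambda_basis" "eqv (sng u) (\<lambda>z. s * sng t z)"
        using word_red by blast
      have e2: "eqv (\<lambda>z. f u * sng u z) (\<lambda>z. (f u * s) * sng t z)"
        using eqv_scale[OF t(2), of "f u"] by (simp add: mult.assoc)
      have e: "eqv (\<lambda>w. f' w + f u * sng u w) (\<lambda>w. lincomb c A w + (f u * s) * sng t w)"
        by (rule eqv_add[OF A(3) e2])
      have ff: "(\<lambda>w. f' w + f u * sng u w) = f" by (auto simp: f'_def sng_def)
      define c' where "c' = c(t := (if t \<in> A then c t else 0) + f u * s)"
      have "(\<lambda>w. lincomb c A w + (f u * s) * sng t w) = lincomb c' (insert t A)"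
        by (auto simp: lincomb_eq A(1) c'_def sng_def)
      note eq = this
      have "eqv f (lincomb c' (insert t A))" using e unfolding ff eq .
      moreover have "finite (insert t A)" "insert t A \<subseteq> lambda_basis" using A t by auto
      ultimately show ?thesis by blast
    qed
  qed
qed

lemma span: "f \<in> diasV \<Longrightarrow> \<exists>A c. finite A \<and> A \<subseteq> lambda_basis \<and> (\<lambda>w. f w - lincomb c A w) \<in> I"
proof -
  assume f: "f \<in> diasV"
  then have "finite (supp f)" unfolding diasV_def by blast
  from span_fin[OF this] f show ?thesis unfolding eqv_def by blast
qed

end

theorem mainTheorem8:
  assumes "(2::'k::field) \<noteq> 0"
  defines "I \<equiv> (dideal_gen (lambda_gens :: ('x::linorder dword \<Rightarrow> 'k) set))"
  shows "(\<forall>f\<in>diasV. \<exists>A c. finite A \<and> A \<subseteq> lambda_basis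
              \<and> (\<lambda>w. f w - lincomb c A w) \<in> I)
       \<and> (\<forall>A c. finite A \<and> A \<subseteq> lambda_basis \<and> lincomb c A \<in> I \<longrightarrow> (\<forall>b\<in>A. c b = 0))"
proof -
  interpret idl I
  proof
    show "lambda_gens \<subseteq> I" unfolding I_def dideal_gen_def by blast
    show "\<And>f g. f \<in> I \<Longrightarrow> g \<in> I \<Longrightarrow> (\<lambda>w. f w + g w) \<in> I"
      unfolding I_def dideal_gen_def is_dideal_def by blast
    show "\<And>f c. f \<in> I \<Longrightarrow> (\<lambda>w. c * f w) \<in> I"
      unfolding I_def dideal_gen_def is_dideal_def by blast
    show "\<And>f g. f \<in> I \<Longrightarrow> g \<in> diasV \<Longrightarrow> dleft f g \<in> I"
      unfolding I_def dideal_gen_def is_dideal_def by blast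
    show "\<And>f g. f \<in> I \<Longrightarrow> g \<in> diasV \<Longrightarrow> dleft g f \<in> I"
      unfolding I_def dideal_gen_def is_dideal_def by blast
    show "\<And>f g. f \<in> I \<Longrightarrow> g \<in> diasV \<Longrightarrow> dright f g \<in> I"
      unfolding I_def dideal_gen_def is_dideal_def by blast
    show "\<And>f g. f \<in> I \<Longrightarrow> g \<in> diasV \<Longrightarrow> dright g f \<in> I"
      unfolding I_def dideal_gen_def is_dideal_def by blast
    show "(2::'k) \<noteq> 0" by fact
  qed
  have part1: "\<forall>f\<in>diasV. \<exists>A c. finite A \<and> A \<subseteq> lambda_basis \<and> (\<lambda>w. f w - lincomb c A w) \<in> I"
    using span by blast
  have part2: "\<forall>b\<in>A. c b = 0" if A: "finite A" "A \<subseteq> lambda_basis" "lincomb c A \<in> I" for A c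
  proof
    fix b assume b: "b \<in> A"
    then obtain y s where bys: "b = (y#s,0)" using A(2) by (auto simp: lambda_basis_def)
    have "lincomb c A \<in> Kset" using A(3) I_sub_K unfolding I_def by blast
    then have "ev (cb y s) (lincomb c A) = 0" using inC_cb[of y s] unfolding Kset_def by blast
    moreover have "ev (cb y s) (lincomb c A) = (\<Sum>u\<in>A. lincomb c A u * cb y s u)"
      by (rule ev_sup) (auto simp: A(1) lincomb_eq split: if_splits)
    moreover have "\<dots> = (\<Sum>u\<in>A. if u = b then c u else 0)"
    proof (rule sum.cong[OF refl])
      fix u assume u: "u \<in> A"
      have bb: "(y#s,0) \<in> lambda_basis" "u \<in> lambda_basis" using A(2) b u bys by auto
      have "cb y s u = (if u = b then 1 else (0::'k))"
        using cb_basis[OF bb] bys by simp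
      then show "lincomb c A u * cb y s u = (if u = b then c u else 0)"
        using u by (simp add: lincomb_eq A(1))
    qed
    moreover have "\<dots> = c b" using b A(1) by (simp add: sum.delta')
    ultimately show "c b = 0" by simp
  qed
  show ?thesis using part1 part2 by blast
qed


end
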